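(* Let $X$ be locally connected. If $(X,\mathbb{F})$ is sensitive, then $(\mathcal{F}(X),\overline{\mathbb{F}})$ is pointwise sensitive.
   Context: $(X,d)$ compact metric, $\mathbb{F}=(f_n)$ continuous self-maps, $\omega_n=f_n\circ\cdots\circ f_1$. Sensitive: there is $\delta>0$ such that for every $x$ and every neighborhood $U$ of $x$ there is $n$ with $\mathrm{diam}(\omega_n(U))>\delta$. Pointwise sensitive: for every point $x$ there is $\delta_x>0$ such that every neighborhood $U$ of $x$ admits $n$ with $\mathrm{diam}(\omega_n(U))>\delta_x$. $\mathcal{F}(X)$: non-empty finite subsets with the Hausdorff metric $d_H$; induced system $\overline{\omega}_n(A)=\omega_n(A)$, notions defined using $d_H$. *)

theory Defs
  imports "HOL-Analysis.Analysis"
begin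

text \<open>Non-autonomous system: maps f 1, f 2, ... (f 0 is irrelevant).
  omega f n = f n o ... o f 1, omega f 0 = id.\<close>
fun omega :: "(nat \<Rightarrow> 'a \<Rightarrow> 'a) \<Rightarrow> nat \<Rightarrow> 'a \<Rightarrow> 'a" where
  "omega f 0 = id"
| "omega f (Suc n) = f (Suc n) \<circ> omega f n"

definition nbhd :: "('b \<Rightarrow> 'b \<Rightarrow> real) \<Rightarrow> 'b set \<Rightarrow> 'b \<Rightarrow> 'b set \<Rightarrow> bool" where
  "nbhd d S x U \<longleftrightarrow> U \<subseteq> S \<and> (\<exists>e>0. {y \<in> S. d x y < e} \<subseteq> U)"

definition gdiam :: "('b \<Rightarrow> 'b \<Rightarrow> real) \<Rightarrow> 'b set \<Rightarrow> real" where
  "gdiam d U = Sup {d x y | x y. x \<in> U \<and> y \<in> U}"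

definition sensitive_gen ::
  "('b \<Rightarrow> 'b \<Rightarrow> real) \<Rightarrow> 'b set \<Rightarrow> (nat \<Rightarrow> 'b \<Rightarrow> 'b) \<Rightarrow> bool" where
  "sensitive_gen d S g \<longleftrightarrow>
     (\<exists>\<delta>>0. \<forall>x\<in>S. \<forall>U. nbhd d S x U \<longrightarrow> (\<exists>n\<ge>1. gdiam d (g n ` U) > \<delta>))"

definition pointwise_sensitive_gen ::
  "('b \<Rightarrow> 'b \<Rightarrow> real) \<Rightarrow> 'b set \<Rightarrow> (nat \<Rightarrow> 'b \<Rightarrow> 'b) \<Rightarrow> bool" where
  "pointwise_sensitive_gen d S g \<longleftrightarrow>
     (\<forall>x\<in>S. \<exists>\<delta>>0. \<forall>U. nbhd d S x U \<longrightarrow> (\<exists>n\<ge>1. gdiam d (g n ` U) > \<delta>))"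

definition hausdorff_dist :: "'a::metric_space set \<Rightarrow> 'a set \<Rightarrow> real" where
  "hausdorff_dist A B = max (SUP a\<in>A. infdist a B) (SUP b\<in>B. infdist b A)"

definition finite_hyperspace :: "'a set \<Rightarrow> 'a set set" where
  "finite_hyperspace X = {A. A \<subseteq> X \<and> finite A \<and> A \<noteq> {}}"

definition induced :: "(nat \<Rightarrow> 'a \<Rightarrow> 'a) \<Rightarrow> nat \<Rightarrow> 'a set \<Rightarrow> 'a set" where
  "induced g n A = g n ` A"

end

theory Submission
  imports Defs
begin

lemma interval_cover:
  fixes c :: "'p \<Rightarrow> real"
  assumes fin: "finite P" and t: "t \<ge> 0" and r: "r \<ge> 0"
    and cov: "{0..t} \<subseteq> (\<Union>p\<in>P. {c p - r <..< c p + r})"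
  shows "t \<le> 2 * r * card P"
proof -
  have "t = measure lborel {0..t}" using t by simp
  also have "\<dots> \<le> measure lborel (\<Union>p\<in>P. {c p - r <..< c p + r})"
  proof (rule measure_mono_fmeasurable[OF cov])
    show "{0..t} \<in> sets lborel" by simp
    have "\<And>p. {c p - r <..< c p + r} \<in> fmeasurable lborel"
      using r by (simp add: fmeasurable_def emeasure_lborel_Ioo)
    then show "(\<Union>p\<in>P. {c p - r <..< c p + r}) \<in> fmeasurable lborel"
      by (intro fmeasurable.finite_UN fin) auto
  qed
  also have "\<dots> \<le> (\<Sum>p\<in>P. measure lborel {c p - r <..< c p + r})"
    by (rule measure_UNION_le[OF fin]) auto
  also have "\<dots> \<le> (\<Sum>p\<in>P. 2 * r)"
    by (intro sum_mono) (use r in \<open>auto simp: measure_lborel_Ioo\<close>)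
  finally show ?thesis by (simp add: mult.commute)
qed

lemma connected_cover:
  fixes C :: "'a::metric_space set"
  assumes "connected C" "finite P" "\<forall>z\<in>C. \<exists>p\<in>P. dist z p < r" "x \<in> C" "y \<in> C"
  shows "dist x y \<le> 2 * r * card P"
proof -
  let ?D = "(\<lambda>z. dist x z) ` C"
  have "connected ?D"
    by (intro connected_continuous_image assms continuous_intros)
  hence iv: "is_interval ?D" by (simp add: is_interval_connected_1)
  have "0 \<in> ?D" using assms(4) by force
  moreover have "dist x y \<in> ?D" using assms(5) by blast
  ultimately have "{0..dist x y} \<subseteq> ?D"
    using iv by (auto simp: is_interval_1)
  also have "?D \<subseteq> (\<Union>p\<in>P. {dist x p - r <..< dist x p + r})"
  proof
    fix u assume "u \<in> ?D"
    then obtain z where z: "z \<in> C" "u = dist x z" by blast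
    then obtain p where "p \<in> P" "dist z p < r" using assms(3) by blast
    moreover have "\<bar>dist x z - dist x p\<bar> \<le> dist z p"
      by (metis abs_le_iff dist_commute dist_triangle3 diff_le_eq minus_diff_eq)
    ultimately show "u \<in> (\<Union>p\<in>P. {dist x p - r <..< dist x p + r})" using z by force
  qed
  finally have cv: "{0..dist x y} \<subseteq> (\<Union>p\<in>P. {dist x p - r <..< dist x p + r})" .
  have "r \<ge> 0"
  proof -
    obtain p where "dist x p < r" using assms(3,4) by blast
    moreover have "0 \<le> dist x p" by simp
    ultimately show ?thesis by linarith
  qed
  then show ?thesis using interval_cover[OF assms(2) _ _ cv] by simp
qed

lemma hd_upper:
  assumes "finite A" "A \<noteq> {}" "finite B" "B \<noteq> {}"
    and "\<And>a. a \<in> A \<Longrightarrow> infdist a B \<le> M" "\<And>b. b \<in> B \<Longrightarrow> infdist b A \<le> M"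
  shows "hausdorff_dist A B \<le> M"
  unfolding hausdorff_dist_def using assms by (auto intro!: cSUP_least)

lemma hd_lower:
  assumes "finite A" "finite B" "b \<in> B"
  shows "infdist b A \<le> hausdorff_dist A B"
proof -
  have "infdist b A \<le> (SUP b\<in>B. infdist b A)"
    using assms by (intro cSUP_upper) (auto intro: bdd_above_finite)
  thus ?thesis unfolding hausdorff_dist_def by linarith
qed

lemma infdist_finite_ge:
  assumes "A \<noteq> {}" "\<And>a. a \<in> A \<Longrightarrow> r \<le> dist x a"
  shows "r \<le> infdist x A"
  using assms unfolding infdist_def by (auto intro!: cINF_greatest)

lemma hd_bound:
  assumes "finite A" "A \<noteq> {}" "finite B" "B \<noteq> {}" "A \<subseteq> X" "B \<subseteq> X"
    and M: "\<And>x y. x \<in> X \<Longrightarrow> y \<in> X \<Longrightarrow> dist x y \<le> M"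
  shows "hausdorff_dist A B \<le> M"
proof (rule hd_upper[OF assms(1-4)])
  fix a assume a: "a \<in> A"
  obtain b where "b \<in> B" using assms(4) by blast
  then have "infdist a B \<le> dist a b" by (rule infdist_le)
  also have "\<dots> \<le> M" using M a \<open>b \<in> B\<close> assms(5,6) by blast
  finally show "infdist a B \<le> M" .
next
  fix b assume b: "b \<in> B"
  obtain a where "a \<in> A" using assms(2) by blast
  then have "infdist b A \<le> dist b a" by (rule infdist_le)
  also have "\<dots> \<le> M" using M b \<open>a \<in> A\<close> assms(5,6) by blast
  finally show "infdist b A \<le> M" .
qed

lemma hd_insert:
  assumes "finite A" "a \<in> A"
  shows "hausdorff_dist A (insert z A) \<le> dist a z"
proof (rule hd_upper)
  fix b assume "b \<in> insert z A"
  then show "infdist b A \<le> dist a z"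
  proof
    assume "b = z" then show ?thesis using infdist_le[OF assms(2), of z] by (simp add: dist_commute)
  next
    assume "b \<in> A" then show ?thesis by simp
  qed
qed (use assms in auto)

lemma hd_self:
  assumes "finite A" "A \<noteq> {}"
  shows "hausdorff_dist A A = 0"
  unfolding hausdorff_dist_def using assms by simp


lemma omega_props:
  assumes "\<And>n. n \<ge> 1 \<Longrightarrow> continuous_on X (f n)"
    and "\<And>n. n \<ge> 1 \<Longrightarrow> f n ` X \<subseteq> X"
  shows "continuous_on X (omega f n) \<and> omega f n ` X \<subseteq> X"
proof (induction n)
  case 0 then show ?case by (simp add: continuous_on_id)
next
  case (Suc n)
  have c: "continuous_on X (f (Suc n))" "f (Suc n) ` X \<subseteq> X" using assms by auto
  have "continuous_on X (f (Suc n) \<circ> omega f n)"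
    using Suc c by (intro continuous_on_compose) (auto intro: continuous_on_subset)
  moreover have "(f (Suc n) \<circ> omega f n) ` X \<subseteq> X" using Suc c by (auto simp: image_subset_iff)
  ultimately show ?case by simp
qed

theorem mainTheorem11:
  fixes X :: "'a::metric_space set" and f :: "nat \<Rightarrow> 'a \<Rightarrow> 'a"
  assumes "compact X"
    and "\<And>n. n \<ge> 1 \<Longrightarrow> continuous_on X (f n)"
    and "\<And>n. n \<ge> 1 \<Longrightarrow> f n ` X \<subseteq> X"
    and "locally connected X"
    and "sensitive_gen dist X (omega f)"
  shows "pointwise_sensitive_gen hausdorff_dist (finite_hyperspace X) (induced (omega f))"
  unfolding pointwise_sensitive_gen_def
proof
  fix A assume "A \<in> finite_hyperspace X"
  then have AX: "A \<subseteq> X" and finA: "finite A" and Ane: "A \<noteq> {}"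
    by (auto simp: finite_hyperspace_def)
  obtain \<delta> where dpos: "\<delta> > 0" and sens:
    "\<And>x U. x \<in> X \<Longrightarrow> nbhd dist X x U \<Longrightarrow> \<exists>n\<ge>1. gdiam dist (omega f n ` U) > \<delta>"
    using assms(5) unfolding sensitive_gen_def by blast
  define k where "k = card A"
  have kpos: "k > 0" using finA Ane by (simp add: k_def card_gt_0_iff)
  define r where "r = \<delta> / (2 * k)"
  have rpos: "r > 0" using dpos kpos by (simp add: r_def)
  obtain M where M: "\<And>x y. x \<in> X \<Longrightarrow> y \<in> X \<Longrightarrow> dist x y \<le> M"
    using compact_imp_bounded[OF assms(1)] by (meson bounded_two_points)
  have om: "\<And>n. continuous_on X (omega f n) \<and> omega f n ` X \<subseteq> X"
    using omega_props[of X f] assms(2,3) by blast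
  show "\<exists>\<delta>'>0. \<forall>U. nbhd hausdorff_dist (finite_hyperspace X) A U \<longrightarrow>
          (\<exists>n\<ge>1. gdiam hausdorff_dist (induced (omega f) n ` U) > \<delta>')"
  proof (intro exI[of _ "r / 2"] conjI allI impI)
    show "r / 2 > 0" using rpos by simp
    fix U assume "nbhd hausdorff_dist (finite_hyperspace X) A U"
    then obtain e where epos: "e > 0" and UF: "U \<subseteq> finite_hyperspace X"
      and eU: "{B \<in> finite_hyperspace X. hausdorff_dist A B < e} \<subseteq> U"
      unfolding nbhd_def by blast
    obtain a1 where a1: "a1 \<in> A" using Ane by blast
    have a1X: "a1 \<in> X" using a1 AX by blast
    have "openin (top_of_set X) (X \<inter> ball a1 e)"
      by (simp add: openin_open_Int)
    then obtain u v where u: "openin (top_of_set X) u" and v: "connected v" "a1 \<in> u" "u \<subseteq> v"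
        "v \<subseteq> X \<inter> ball a1 e"
      using locallyE[OF assms(4)] a1X epos by (metis IntI centre_in_ball)
    have "nbhd dist X a1 v"
    proof -
      obtain e' where "e' > 0" "\<forall>x'\<in>X. dist x' a1 < e' \<longrightarrow> x' \<in> u"
        using u v(2) unfolding openin_euclidean_subtopology_iff by blast
      then show ?thesis unfolding nbhd_def using v
        by (auto simp: dist_commute intro!: exI[of _ e'])
    qed
    then obtain n where n: "n \<ge> 1" "gdiam dist (omega f n ` v) > \<delta>"
      using sens a1X by blast
    have "{dist x y | x y. x \<in> omega f n ` v \<and> y \<in> omega f n ` v} \<noteq> {}"
      using v(2,3) by blast
    then obtain x y where xy: "x \<in> omega f n ` v" "y \<in> omega f n ` v" "dist x y > \<delta>"
      using less_cSupD[OF _ n(2)[unfolded gdiam_def]] by blast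
    have vX: "v \<subseteq> X" using v by blast
    have "\<exists>z\<in>v. \<forall>p\<in>omega f n ` A. r \<le> dist (omega f n z) p"
    proof (rule ccontr)
      assume "\<not> ?thesis"
      then have cov: "\<forall>w\<in>omega f n ` v. \<exists>p\<in>omega f n ` A. dist w p < r"
        by (auto simp: not_le)
      have "connected (omega f n ` v)"
        using om[of n] vX v(1) by (meson connected_continuous_image continuous_on_subset)
      then have "dist x y \<le> 2 * r * card (omega f n ` A)"
        using connected_cover[OF _ _ cov xy(1,2)] finA by blast
      also have "\<dots> \<le> 2 * r * k"
        using rpos finA by (simp add: k_def card_image_le)
      also have "\<dots> = \<delta>" using kpos by (simp add: r_def)
      finally show False using xy(3) by simp
    qed
    then obtain z where z: "z \<in> v" "\<And>p. p \<in> omega f n ` A \<Longrightarrow> r \<le> dist (omega f n z) p"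
      by blast
    define B where "B = insert z A"
    have BF: "B \<in> finite_hyperspace X" using z(1) vX AX finA by (auto simp: B_def finite_hyperspace_def)
    have "hausdorff_dist A B \<le> dist a1 z" unfolding B_def by (rule hd_insert[OF finA a1])
    also have "\<dots> < e" using z(1) v(4) by auto
    finally have BU: "B \<in> U" using eU BF by blast
    have AU: "A \<in> U" using eU hd_self[OF finA Ane] epos \<open>A \<in> finite_hyperspace X\<close> by auto
    have "r \<le> infdist (omega f n z) (omega f n ` A)"
      using Ane z(2) by (intro infdist_finite_ge) auto
    also have "\<dots> \<le> hausdorff_dist (omega f n ` A) (omega f n ` B)"
      using finA by (intro hd_lower) (auto simp: B_def)
    also have "\<dots> \<le> gdiam hausdorff_dist (induced (omega f) n ` U)"
      unfolding gdiam_def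
    proof (rule cSup_upper)
      show "hausdorff_dist (omega f n ` A) (omega f n ` B) \<in>
        {hausdorff_dist x y | x y. x \<in> induced (omega f) n ` U \<and> y \<in> induced (omega f) n ` U}"
        using AU BU unfolding induced_def by blast
      show "bdd_above {hausdorff_dist x y | x y. x \<in> induced (omega f) n ` U \<and> y \<in> induced (omega f) n ` U}"
      proof (rule bdd_aboveI)
        fix t assume "t \<in> {hausdorff_dist x y | x y. x \<in> induced (omega f) n ` U \<and> y \<in> induced (omega f) n ` U}"
        then obtain C D where CD: "C \<in> U" "D \<in> U" "t = hausdorff_dist (omega f n ` C) (omega f n ` D)"
          unfolding induced_def by blast
        then have "C \<in> finite_hyperspace X" "D \<in> finite_hyperspace X" using UF by auto
        then show "t \<le> M" unfolding CD(3)
          using om[of n] by (intro hd_bound[OF _ _ _ _ _ _ M]) (auto simp: finite_hyperspace_def)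
      qed
    qed
    finally show "\<exists>n\<ge>1. gdiam hausdorff_dist (induced (omega f) n ` U) > r / 2"
      using n(1) rpos by (intro exI[of _ n]) auto
  qed
qed

end
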